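(* Let $V$ be a poset, $m$ a maximal node of positive height, and let $U$ be a splitting of $V$ at $m$ with splitting map $\varphi$ and associated set $\mathcal M=\varphi^{-1}(m)$. Then $d_{L_U(n)}(n)=d_{L_V(\varphi(n))}(\varphi(n))$ for every node $n\in U\setminus\mathcal M$ of positive height.
   Context: For a poset $W$: $L_W(u)=\{v\le u\}$, $G(u)=\{v\ge u\}$; height of $u$ is the supremum of lengths of chains in $L(u)$; $H_1$ = height-one nodes; $\mathcal H_W$ = minimal nodes together with height-one nodes dominating at least two minimal nodes. For a poset $W$ with single maximal node $n$ and dimension $\ge1$: $\mathcal H_W^*=\mathcal H_W\setminus\{n\}$; $\Lambda_W$ = $(H_1\cap\mathcal H_W^* )$ together with all $v\in\mathcal H_W^*$ with $G(v)\cap H_1\cap\mathcal H_W^*=\emptyset$; $d_W(n)=|\Lambda_W|$. Splitting: $U$ is a splitting of $V$ at $m$ via $\varphi:U\to V$ if $\varphi$ is surjective order-preserving, there is a finite nonempty $\mathcal M\subseteq\max U$ of positive-height nodes with $\varphi^{-1}(m)=\mathcal M$, $|\varphi^{-1}(v)|=1$ for $v\ne m$, and whenever $\varphi(x')=x\le y$ there is $y'\ge x'$ with $\varphi(y')=y$. *)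

theory Defs
  imports Main "HOL-Library.Extended_Nat"
begin

definition poset :: "'a set \<Rightarrow> ('a \<Rightarrow> 'a \<Rightarrow> bool) \<Rightarrow> bool" where
  "poset W le \<longleftrightarrow>
     (\<forall>x\<in>W. le x x) \<and>
     (\<forall>x\<in>W. \<forall>y\<in>W. le x y \<and> le y x \<longrightarrow> x = y) \<and>
     (\<forall>x\<in>W. \<forall>y\<in>W. \<forall>z\<in>W. le x y \<and> le y z \<longrightarrow> le x z)"

definition downset :: "'a set \<Rightarrow> ('a \<Rightarrow> 'a \<Rightarrow> bool) \<Rightarrow> 'a \<Rightarrow> 'a set" where
  "downset W le u = {v\<in>W. le v u}"

definition upset :: "'a set \<Rightarrow> ('a \<Rightarrow> 'a \<Rightarrow> bool) \<Rightarrow> 'a \<Rightarrow> 'a set" where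
  "upset W le u = {v\<in>W. le u v}"

definition is_chain :: "('a \<Rightarrow> 'a \<Rightarrow> bool) \<Rightarrow> 'a set \<Rightarrow> bool" where
  "is_chain le C \<longleftrightarrow> (\<forall>x\<in>C. \<forall>y\<in>C. le x y \<or> le y x)"

text \<open>Height: supremum of lengths (number of elements minus one) of chains in the downset.
  Infinite chains contain arbitrarily long finite ones, so finite chains suffice.\<close>
definition height :: "'a set \<Rightarrow> ('a \<Rightarrow> 'a \<Rightarrow> bool) \<Rightarrow> 'a \<Rightarrow> enat" where
  "height W le u = Sup {enat (card C - 1) | C. finite C \<and> C \<noteq> {} \<and> C \<subseteq> downset W le u \<and> is_chain le C}"

definition minimal_nodes :: "'a set \<Rightarrow> ('a \<Rightarrow> 'a \<Rightarrow> bool) \<Rightarrow> 'a set" where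
  "minimal_nodes W le = {u\<in>W. \<forall>v\<in>W. le v u \<longrightarrow> v = u}"

definition maximal_nodes :: "'a set \<Rightarrow> ('a \<Rightarrow> 'a \<Rightarrow> bool) \<Rightarrow> 'a set" where
  "maximal_nodes W le = {u\<in>W. \<forall>v\<in>W. le u v \<longrightarrow> v = u}"

definition H1 :: "'a set \<Rightarrow> ('a \<Rightarrow> 'a \<Rightarrow> bool) \<Rightarrow> 'a set" where
  "H1 W le = {u\<in>W. height W le u = 1}"

definition HH :: "'a set \<Rightarrow> ('a \<Rightarrow> 'a \<Rightarrow> bool) \<Rightarrow> 'a set" where
  "HH W le = minimal_nodes W le \<union>
     {u\<in>H1 W le. \<exists>a b. a \<in> minimal_nodes W le \<and> b \<in> minimal_nodes W le \<and> a \<noteq> b \<and> le a u \<and> le b u}"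

definition HH_star :: "'a set \<Rightarrow> ('a \<Rightarrow> 'a \<Rightarrow> bool) \<Rightarrow> 'a \<Rightarrow> 'a set" where
  "HH_star W le n = HH W le - {n}"

definition Lambda :: "'a set \<Rightarrow> ('a \<Rightarrow> 'a \<Rightarrow> bool) \<Rightarrow> 'a \<Rightarrow> 'a set" where
  "Lambda W le n = (H1 W le \<inter> HH_star W le n) \<union>
     {v\<in>HH_star W le n. upset W le v \<inter> H1 W le \<inter> HH_star W le n = {}}"

definition ecard :: "'a set \<Rightarrow> enat" where
  "ecard A = (if finite A then enat (card A) else \<infinity>)"

definition dW :: "'a set \<Rightarrow> ('a \<Rightarrow> 'a \<Rightarrow> bool) \<Rightarrow> 'a \<Rightarrow> enat" where
  "dW W le n = ecard (Lambda W le n)"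

definition splitting ::
  "'a set \<Rightarrow> ('a \<Rightarrow> 'a \<Rightarrow> bool) \<Rightarrow> 'b set \<Rightarrow> ('b \<Rightarrow> 'b \<Rightarrow> bool) \<Rightarrow> 'b \<Rightarrow> ('a \<Rightarrow> 'b) \<Rightarrow> bool" where
  "splitting U leU V leV m phi \<longleftrightarrow>
     phi ` U = V \<and>
     (\<forall>x\<in>U. \<forall>y\<in>U. leU x y \<longrightarrow> leV (phi x) (phi y)) \<and>
     (\<exists>M. finite M \<and> M \<noteq> {} \<and> M \<subseteq> maximal_nodes U leU \<and> (\<forall>x\<in>M. height U leU x > 0) \<and>
          {x\<in>U. phi x = m} = M) \<and>
     (\<forall>v\<in>V. v \<noteq> m \<longrightarrow> card {x\<in>U. phi x = v} = 1) \<and>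
     (\<forall>x'\<in>U. \<forall>y\<in>V. leV (phi x') y \<longrightarrow> (\<exists>y'\<in>U. leU x' y' \<and> phi y' = y))"

end

theory Submission
  imports Defs
begin

lemma image_collect_transfer:
  assumes "bij_betw f A B" "\<And>x. x \<in> A \<Longrightarrow> P x = Q (f x)"
  shows "{y\<in>B. Q y} = f ` {x\<in>A. P x}"
  using assms unfolding bij_betw_def by auto

locale iso =
  fixes A :: "'a set" and le :: "'a \<Rightarrow> 'a \<Rightarrow> bool"
    and B :: "'b set" and le' :: "'b \<Rightarrow> 'b \<Rightarrow> bool" and f :: "'a \<Rightarrow> 'b"
  assumes bij: "bij_betw f A B"
    and ord: "\<And>x y. x \<in> A \<Longrightarrow> y \<in> A \<Longrightarrow> le x y = le' (f x) (f y)"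
begin

lemma inj: "inj_on f A" and img: "f ` A = B"
  using bij unfolding bij_betw_def by auto

lemma ballB: "(\<forall>y\<in>B. Q y) = (\<forall>x\<in>A. Q (f x))"
  using img by auto

lemma bexB: "(\<exists>y\<in>B. Q y) = (\<exists>x\<in>A. Q (f x))"
  using img by auto

lemma eqA: "x \<in> A \<Longrightarrow> y \<in> A \<Longrightarrow> (f x = f y) = (x = y)"
  using inj unfolding inj_on_def by auto

lemma downset_tr: "u \<in> A \<Longrightarrow> downset B le' (f u) = f ` downset A le u"
  unfolding downset_def by (rule image_collect_transfer[OF bij]) (simp add: ord)

lemma upset_tr: "u \<in> A \<Longrightarrow> upset B le' (f u) = f ` upset A le u"
  unfolding upset_def by (rule image_collect_transfer[OF bij]) (simp add: ord)

lemma chain_tr: "C \<subseteq> A \<Longrightarrow> is_chain le' (f ` C) = is_chain le C"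
  unfolding is_chain_def by (auto simp: ord subset_iff)

lemma minA: "minimal_nodes A le \<subseteq> A" unfolding minimal_nodes_def by blast
lemma H1A: "H1 A le \<subseteq> A" unfolding H1_def by blast
lemma HHA: "HH A le \<subseteq> A"
  unfolding HH_def by (rule Un_least[OF minA subset_trans[OF _ H1A]]) (rule Collect_restrict)
lemma HHsA: "HH_star A le n \<subseteq> A" unfolding HH_star_def by (rule subset_trans[OF Diff_subset HHA])
lemma LamA: "Lambda A le n \<subseteq> A"
  unfolding Lambda_def by (rule Un_least[OF subset_trans[OF Int_lower2 HHsA] subset_trans[OF Collect_restrict HHsA]])

lemma height_tr:
  assumes u: "u \<in> A"
  shows "height B le' (f u) = height A le u"
proof -
  have "{enat (card C - 1) | C. finite C \<and> C \<noteq> {} \<and> C \<subseteq> downset B le' (f u) \<and> is_chain le' C}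
      = {enat (card C - 1) | C. finite C \<and> C \<noteq> {} \<and> C \<subseteq> downset A le u \<and> is_chain le C}"
    (is "?L = ?R")
  proof
    show "?L \<subseteq> ?R"
    proof
      fix z assume "z \<in> ?L"
      then obtain D where D: "z = enat (card D - 1)" "finite D" "D \<noteq> {}"
        "D \<subseteq> downset B le' (f u)" "is_chain le' D" by blast
      define C where "C = {x\<in>A. f x \<in> D}"
      have DA: "D \<subseteq> B" using D(4) unfolding downset_def by auto
      have fC: "f ` C = D" unfolding C_def using DA img by auto
      have CA: "C \<subseteq> A" unfolding C_def by auto
      have injC: "inj_on f C" by (rule inj_on_subset[OF inj CA])
      have fin: "finite C" using finite_image_iff[OF injC] fC D(2) by simp
      have cd: "card C = card D" using card_image[OF injC] fC by simp
      have "C \<subseteq> downset A le u"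
      proof
        fix x assume "x \<in> C"
        then have "f x \<in> f ` downset A le u" using D(4) fC downset_tr[OF u] by auto
        then show "x \<in> downset A le u" using \<open>x \<in> C\<close> CA eqA
          unfolding downset_def by auto
      qed
      moreover have "is_chain le C" using chain_tr[OF CA] fC D(5) by simp
      ultimately have "finite C \<and> C \<noteq> {} \<and> C \<subseteq> downset A le u \<and> is_chain le C"
        using fin fC D(3) by auto
      moreover have "z = enat (card C - 1)" using D(1) cd by simp
      ultimately show "z \<in> ?R" by (intro CollectI exI[of _ C]) (simp only: simp_thms)
    qed
  next
    show "?R \<subseteq> ?L"
    proof
      fix z assume "z \<in> ?R"
      then obtain C where C: "z = enat (card C - 1)" "finite C" "C \<noteq> {}"
        "C \<subseteq> downset A le u" "is_chain le C" by blast
      have CA: "C \<subseteq> A" using C(4) unfolding downset_def by auto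
      have injC: "inj_on f C" by (rule inj_on_subset[OF inj CA])
      have "f ` C \<subseteq> downset B le' (f u)" using C(4) downset_tr[OF u] by auto
      moreover have "is_chain le' (f ` C)" using chain_tr[OF CA] C(5) by simp
      moreover have "card (f ` C) = card C" by (rule card_image[OF injC])
      ultimately have "finite (f ` C) \<and> f ` C \<noteq> {} \<and> f ` C \<subseteq> downset B le' (f u) \<and> is_chain le' (f ` C)"
        "z = enat (card (f ` C) - 1)" using C by auto
      then show "z \<in> ?L" by (intro CollectI exI[of _ "f ` C"]) (simp only: simp_thms)
    qed
  qed
  then show ?thesis unfolding height_def by simp
qed

lemma min_tr: "minimal_nodes B le' = f ` minimal_nodes A le"
  unfolding minimal_nodes_def
proof (rule image_collect_transfer[OF bij])
  fix x assume x: "x \<in> A"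
  show "(\<forall>v\<in>A. le v x \<longrightarrow> v = x) = (\<forall>v\<in>B. le' v (f x) \<longrightarrow> v = f x)"
  proof
    assume h: "\<forall>v\<in>A. le v x \<longrightarrow> v = x"
    show "\<forall>v\<in>B. le' v (f x) \<longrightarrow> v = f x"
    proof (intro ballI impI)
      fix v assume "v \<in> B" "le' v (f x)"
      then obtain w where w: "w \<in> A" "v = f w" using img by blast
      then have "le w x" using ord[OF w(1) x] \<open>le' v (f x)\<close> by simp
      then show "v = f x" using h w by blast
    qed
  next
    assume h: "\<forall>v\<in>B. le' v (f x) \<longrightarrow> v = f x"
    show "\<forall>v\<in>A. le v x \<longrightarrow> v = x"
    proof (intro ballI impI)
      fix v assume v: "v \<in> A" "le v x"
      then have "f v \<in> B" "le' (f v) (f x)" using img ord[OF v(1) x] by auto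
      then have "f v = f x" using h by blast
      then show "v = x" using eqA v(1) x by blast
    qed
  qed
qed

lemma H1_tr: "H1 B le' = f ` H1 A le"
  unfolding H1_def
  by (rule image_collect_transfer[OF bij]) (simp add: height_tr)

lemma HH_tr: "HH B le' = f ` HH A le"
proof -
  have mA: "minimal_nodes A le \<subseteq> A" by (rule minA)
  have hA: "H1 A le \<subseteq> A" by (rule H1A)
  have key: "(\<exists>a b. a \<in> minimal_nodes B le' \<and> b \<in> minimal_nodes B le' \<and> a \<noteq> b \<and> le' a (f u) \<and> le' b (f u))
     = (\<exists>a b. a \<in> minimal_nodes A le \<and> b \<in> minimal_nodes A le \<and> a \<noteq> b \<and> le a u \<and> le b u)"
    if u: "u \<in> A" for u
  proof
    assume "\<exists>a b. a \<in> minimal_nodes B le' \<and> b \<in> minimal_nodes B le' \<and> a \<noteq> b \<and> le' a (f u) \<and> le' b (f u)"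
    then obtain a b where ab: "a \<in> minimal_nodes A le" "b \<in> minimal_nodes A le" "f a \<noteq> f b"
      "le' (f a) (f u)" "le' (f b) (f u)" unfolding min_tr by blast
    have "a \<in> A" "b \<in> A" using ab mA by auto
    then have "a \<noteq> b" "le a u" "le b u" using ab u ord by auto
    then show "\<exists>a b. a \<in> minimal_nodes A le \<and> b \<in> minimal_nodes A le \<and> a \<noteq> b \<and> le a u \<and> le b u"
      using ab by blast
  next
    assume "\<exists>a b. a \<in> minimal_nodes A le \<and> b \<in> minimal_nodes A le \<and> a \<noteq> b \<and> le a u \<and> le b u"
    then obtain a b where ab: "a \<in> minimal_nodes A le" "b \<in> minimal_nodes A le" "a \<noteq> b"
      "le a u" "le b u" by blast
    have "a \<in> A" "b \<in> A" using ab mA by auto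
    then have "f a \<noteq> f b" "le' (f a) (f u)" "le' (f b) (f u)" using ab u ord eqA by auto
    moreover have "f a \<in> minimal_nodes B le'" "f b \<in> minimal_nodes B le'" using ab min_tr by auto
    ultimately show "\<exists>a b. a \<in> minimal_nodes B le' \<and> b \<in> minimal_nodes B le' \<and> a \<noteq> b \<and> le' a (f u) \<and> le' b (f u)"
      by blast
  qed
  have gen: "{y\<in>f ` S. Q y} = f ` {x\<in>S. Q (f x)}" for S and Q :: "'b \<Rightarrow> bool" by auto
  have "{u\<in>H1 B le'. \<exists>a b. a \<in> minimal_nodes B le' \<and> b \<in> minimal_nodes B le' \<and> a \<noteq> b \<and> le' a u \<and> le' b u}
     = f ` {u\<in>H1 A le. \<exists>a b. a \<in> minimal_nodes A le \<and> b \<in> minimal_nodes A le \<and> a \<noteq> b \<and> le a u \<and> le b u}"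
    unfolding H1_tr gen
  proof (intro arg_cong[where f="image f"] Collect_cong)
    fix x
    show "(x \<in> H1 A le \<and> (\<exists>a b. a \<in> minimal_nodes B le' \<and> b \<in> minimal_nodes B le' \<and> a \<noteq> b \<and> le' a (f x) \<and> le' b (f x)))
      = (x \<in> H1 A le \<and> (\<exists>a b. a \<in> minimal_nodes A le \<and> b \<in> minimal_nodes A le \<and> a \<noteq> b \<and> le a x \<and> le b x))"
    proof (cases "x \<in> H1 A le")
      case True
      then have "x \<in> A" using hA by blast
      from key[OF this] show ?thesis by simp
    qed simp
  qed
  then show ?thesis unfolding HH_def by (simp add: image_Un min_tr)
qed

lemma HHs_tr: "n \<in> A \<Longrightarrow> HH_star B le' (f n) = f ` HH_star A le n"
proof -
  assume n: "n \<in> A"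
  have h: "HH A le \<subseteq> A" by (rule HHA)
  have "f ` (HH A le - {n}) = f ` HH A le - f ` {n}"
    by (rule inj_on_image_set_diff[OF inj]) (use h n in auto)
  then show ?thesis unfolding HH_star_def HH_tr by simp
qed

lemma Lambda_tr:
  assumes n: "n \<in> A"
  shows "Lambda B le' (f n) = f ` Lambda A le n"
proof -
  have sA: "HH_star A le n \<subseteq> A" by (rule HHsA)
  have hA: "H1 A le \<subseteq> A" by (rule H1A)
  have uA: "\<And>v. upset A le v \<subseteq> A" unfolding upset_def by auto
  have 1: "H1 B le' \<inter> HH_star B le' (f n) = f ` (H1 A le \<inter> HH_star A le n)"
    unfolding H1_tr HHs_tr[OF n] by (rule inj_on_image_Int[OF inj hA sA, symmetric])
  have 2: "upset B le' (f v) \<inter> H1 B le' \<inter> HH_star B le' (f n)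
       = f ` (upset A le v \<inter> H1 A le \<inter> HH_star A le n)" if v: "v \<in> A" for v
  proof -
    have "f ` (upset A le v \<inter> H1 A le) = f ` upset A le v \<inter> f ` H1 A le"
      by (rule inj_on_image_Int[OF inj uA hA])
    moreover have "f ` (upset A le v \<inter> H1 A le \<inter> HH_star A le n) = f ` (upset A le v \<inter> H1 A le) \<inter> f ` HH_star A le n"
      by (rule inj_on_image_Int[OF inj _ sA]) (use uA in blast)
    ultimately show ?thesis unfolding H1_tr HHs_tr[OF n] upset_tr[OF v] by simp
  qed
  have 3: "{v\<in>HH_star B le' (f n). upset B le' v \<inter> H1 B le' \<inter> HH_star B le' (f n) = {}}
     = f ` {v\<in>HH_star A le n. upset A le v \<inter> H1 A le \<inter> HH_star A le n = {}}"
  proof -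
    have gen: "{y\<in>f ` S. Q y} = f ` {x\<in>S. Q (f x)}" for S and Q :: "'b \<Rightarrow> bool" by blast
    show ?thesis unfolding HHs_tr[OF n] gen
    proof (intro arg_cong[where f="image f"] Collect_cong)
      fix x
      show "(x \<in> HH_star A le n \<and> upset B le' (f x) \<inter> H1 B le' \<inter> f ` HH_star A le n = {}) =
        (x \<in> HH_star A le n \<and> upset A le x \<inter> H1 A le \<inter> HH_star A le n = {})"
      proof (cases "x \<in> HH_star A le n")
        case True
        then have "x \<in> A" using sA by blast
        from 2[OF this] show ?thesis unfolding HHs_tr[OF n] by simp
      qed simp
    qed
  qed
  show ?thesis unfolding Lambda_def 1 3 image_Un by (rule refl)
qed

lemma dW_tr: "n \<in> A \<Longrightarrow> dW B le' (f n) = dW A le n"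
proof -
  assume n: "n \<in> A"
  have "Lambda A le n \<subseteq> A" by (rule LamA)
  then have i: "inj_on f (Lambda A le n)" using inj inj_on_subset by blast
  have fi: "finite (f ` Lambda A le n) = finite (Lambda A le n)" by (rule finite_image_iff[OF i])
  have ca: "card (f ` Lambda A le n) = card (Lambda A le n)" by (rule card_image[OF i])
  show ?thesis unfolding dW_def Lambda_tr[OF n] ecard_def fi ca by (rule refl)
qed

end

theorem lemma5p5:
  fixes U :: "'a set" and leU :: "'a \<Rightarrow> 'a \<Rightarrow> bool"
    and V :: "'b set" and leV :: "'b \<Rightarrow> 'b \<Rightarrow> bool"
    and m :: 'b and phi :: "'a \<Rightarrow> 'b" and n :: 'a
  assumes "poset U leU" and "poset V leV"
    and "m \<in> maximal_nodes V leV" and "height V leV m > 0"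
    and "splitting U leU V leV m phi"
    and "n \<in> U" and "phi n \<noteq> m" and "height U leU n > 0"
  shows "dW (downset U leU n) leU n = dW (downset V leV (phi n)) leV (phi n)"
proof -
  from assms(5) obtain M where sp: "phi ` U = V"
    "\<forall>x\<in>U. \<forall>y\<in>U. leU x y \<longrightarrow> leV (phi x) (phi y)"
    "M \<subseteq> maximal_nodes U leU" "{x\<in>U. phi x = m} = M"
    "\<forall>v\<in>V. v \<noteq> m \<longrightarrow> card {x\<in>U. phi x = v} = 1"
    "\<forall>x'\<in>U. \<forall>y\<in>V. leV (phi x') y \<longrightarrow> (\<exists>y'\<in>U. leU x' y' \<and> phi y' = y)"
    unfolding splitting_def by blast
  have uniq: "x = y" if "x \<in> U" "y \<in> U" "phi x = phi y" "phi x \<noteq> m" for x y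
  proof -
    have "phi x \<in> V" using sp(1) that by auto
    then have "card {z\<in>U. phi z = phi x} = 1" using sp(5) that by auto
    then obtain a where "{z\<in>U. phi z = phi x} = {a}" using card_1_singletonE by blast
    moreover have "x \<in> {z\<in>U. phi z = phi x}" "y \<in> {z\<in>U. phi z = phi x}" using that by auto
    ultimately show ?thesis by auto
  qed
  define A where "A = downset U leU n"
  define B where "B = downset V leV (phi n)"
  have notm: "phi x \<noteq> m" if "x \<in> A" for x
  proof
    assume "phi x = m"
    then have "x \<in> maximal_nodes U leU" using sp(3,4) that unfolding A_def downset_def by auto
    then have "n = x" using that assms(6) unfolding A_def downset_def maximal_nodes_def by auto
    then show False using \<open>phi x = m\<close> assms(7) by simp
  qed
  have AU: "A \<subseteq> U" unfolding A_def downset_def by auto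
  have nA: "n \<in> A" using assms(1,6) unfolding A_def downset_def poset_def by auto
  have pn: "phi n \<in> V" using sp(1) assms(6) by auto
  have iso: "iso A leU B leV phi"
  proof
    show "bij_betw phi A B" unfolding bij_betw_def
    proof
      show "inj_on phi A" unfolding inj_on_def using uniq notm AU by blast
      show "phi ` A = B"
      proof
        show "phi ` A \<subseteq> B" using sp(1,2) AU assms(6) unfolding A_def B_def downset_def by auto
        show "B \<subseteq> phi ` A"
        proof
          fix v assume v: "v \<in> B"
          have vV: "v \<in> V" and vl: "leV v (phi n)" using v unfolding B_def downset_def by auto
          have "v \<noteq> m"
          proof
            assume "v = m"
            then have "phi n = m" using assms(3) vl pn unfolding maximal_nodes_def by auto
            then show False using assms(7) by simp
          qed
          obtain x where x: "x \<in> U" "phi x = v" using sp(1) vV by auto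
          then obtain y' where y': "y' \<in> U" "leU x y'" "phi y' = phi n"
            using sp(6) vl pn by blast
          have "y' = n" using uniq[OF y'(1) assms(6) y'(3)] y'(3) assms(7) by simp
          then show "v \<in> phi ` A" using x y' unfolding A_def downset_def by auto
        qed
      qed
    qed
  next
    fix x y assume x: "x \<in> A" and y: "y \<in> A"
    show "leU x y = leV (phi x) (phi y)"
    proof
      show "leU x y \<Longrightarrow> leV (phi x) (phi y)" using sp(2) x y AU by auto
      assume l: "leV (phi x) (phi y)"
      have "phi y \<in> V" using sp(1) y AU by auto
      then obtain y' where y': "y' \<in> U" "leU x y'" "phi y' = phi y"
        using sp(6) l x AU by blast
      have yU: "y \<in> U" using y AU by blast
      have "y' = y" using uniq[OF y'(1) yU y'(3)] y'(3) notm[OF y] by simp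
      then show "leU x y" using y' by simp
    qed
  qed
  have "dW B leV (phi n) = dW A leU n" by (rule iso.dW_tr[OF iso nA])
  then show ?thesis unfolding A_def B_def by (rule sym)
qed

end
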